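(* Let $G$ be a graph with a linear order $<$ on $V(G)$ satisfying the X-property, and let $s<t$ be vertices with $d^*:=\operatorname{dist}(s,t)<\infty$. Then, with $d=d^*$, at least one of the following holds: (i) $\beta_s(\sigma)=\beta_t(\tau)$ for some nonnegative integers $\sigma,\tau$ with $\sigma+\tau=d$; (ii) $G$ contains an edge between $\alpha_s(\sigma)$ and $\alpha_t(\tau)$ for some nonnegative integers $\sigma,\tau$ with $\sigma+\tau=d-1$; (iii) there are nonnegative integers $\sigma,\tau$ with $\sigma+\tau=d-3$ and vertices $v\in\{\alpha_s(\sigma),\beta_s(\sigma)\}$, $w\in\{\alpha_t(\tau),\beta_t(\tau)\}$ with $v<w$, $\operatorname{rhorizon}(v)\ge t$ and $\operatorname{lhorizon}(w)\le s$.
   Context: The X-property: for all vertices $p<q<r<s$, if $\{p,r\}\in E(G)$ and $\{q,s\}\in E(G)$ then $\{p,s\}\in E(G)$. $N[v]$ is the closed neighborhood; $\operatorname{lhorizon}(v):=\min N[v]$ and $\operatorname{rhorizon}(v):=\max N[v]$ w.r.t. $<$. For an integer $k\ge 0$: $\alpha_s(k)$ (resp. $\beta_s(k)$) is the leftmost (resp. rightmost) vertex reachable from $s$ by a path of length at most $k$ using only vertices $v\le t$; $\alpha_t(k)$ (resp. $\beta_t(k)$) is the rightmost (resp. leftmost) vertex reachable from $t$ by a path of length at most $k$ using only vertices $v\ge s$. *)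

theory Defs
  imports Main
begin

definition simple_graph :: "'a set \<Rightarrow> 'a set set \<Rightarrow> bool" where
  "simple_graph V E \<longleftrightarrow> finite V \<and>
     (\<forall>e\<in>E. \<exists>u v. u \<noteq> v \<and> u \<in> V \<and> v \<in> V \<and> e = {u, v})"

definition X_property :: "'a::linorder set \<Rightarrow> 'a set set \<Rightarrow> bool" where
  "X_property V E \<longleftrightarrow> (\<forall>p\<in>V. \<forall>q\<in>V. \<forall>r\<in>V. \<forall>s\<in>V.
      p < q \<and> q < r \<and> r < s \<and> {p, r} \<in> E \<and> {q, s} \<in> E \<longrightarrow> {p, s} \<in> E)"

definition is_path :: "'a set \<Rightarrow> 'a set set \<Rightarrow> 'a list \<Rightarrow> bool" where
  "is_path V E xs \<longleftrightarrow> xs \<noteq> [] \<and> set xs \<subseteq> V \<and> distinct xs \<and>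
     (\<forall>i. i + 1 < length xs \<longrightarrow> {xs ! i, xs ! (i + 1)} \<in> E)"

definition reach_within :: "'a set \<Rightarrow> 'a set set \<Rightarrow> 'a set \<Rightarrow> nat \<Rightarrow> 'a \<Rightarrow> 'a \<Rightarrow> bool" where
  "reach_within V E U k x y \<longleftrightarrow> (\<exists>xs. is_path V E xs \<and> set xs \<subseteq> U \<and>
      hd xs = x \<and> last xs = y \<and> length xs \<le> k + 1)"

text \<open>Distance (meaningful when some path from x to y exists).\<close>
definition graph_dist :: "'a set \<Rightarrow> 'a set set \<Rightarrow> 'a \<Rightarrow> 'a \<Rightarrow> nat" where
  "graph_dist V E x y = (LEAST k. reach_within V E V k x y)"

definition lhorizon :: "'a set \<Rightarrow> 'a set set \<Rightarrow> 'a::linorder \<Rightarrow> 'a" where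
  "lhorizon V E v = Min (insert v {u\<in>V. {u, v} \<in> E})"

definition rhorizon :: "'a set \<Rightarrow> 'a set set \<Rightarrow> 'a::linorder \<Rightarrow> 'a" where
  "rhorizon V E v = Max (insert v {u\<in>V. {u, v} \<in> E})"

definition alpha_s :: "'a set \<Rightarrow> 'a set set \<Rightarrow> 'a::linorder \<Rightarrow> 'a \<Rightarrow> nat \<Rightarrow> 'a" where
  "alpha_s V E s t k = Min {y. reach_within V E {v\<in>V. v \<le> t} k s y}"

definition beta_s :: "'a set \<Rightarrow> 'a set set \<Rightarrow> 'a::linorder \<Rightarrow> 'a \<Rightarrow> nat \<Rightarrow> 'a" where
  "beta_s V E s t k = Max {y. reach_within V E {v\<in>V. v \<le> t} k s y}"

definition alpha_t :: "'a set \<Rightarrow> 'a set set \<Rightarrow> 'a::linorder \<Rightarrow> 'a \<Rightarrow> nat \<Rightarrow> 'a" where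
  "alpha_t V E s t k = Max {y. reach_within V E {v\<in>V. s \<le> v} k t y}"

definition beta_t :: "'a set \<Rightarrow> 'a set set \<Rightarrow> 'a::linorder \<Rightarrow> 'a \<Rightarrow> nat \<Rightarrow> 'a" where
  "beta_t V E s t k = Min {y. reach_within V E {v\<in>V. s \<le> v} k t y}"

end

theory Submission
  imports Defs
begin
definition wwalk :: "'a set \<Rightarrow> 'a set set \<Rightarrow> 'a list \<Rightarrow> bool" where
  "wwalk V E xs \<longleftrightarrow> xs \<noteq> [] \<and> set xs \<subseteq> V \<and> (\<forall>i. i + 1 < length xs \<longrightarrow> {xs ! i, xs ! (i + 1)} \<in> E)"

definition wk :: "'a set \<Rightarrow> 'a set set \<Rightarrow> 'a set \<Rightarrow> nat \<Rightarrow> 'a \<Rightarrow> 'a \<Rightarrow> bool" where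
  "wk V E U k x y \<longleftrightarrow> (\<exists>xs. wwalk V E xs \<and> set xs \<subseteq> U \<and> hd xs = x \<and> last xs = y \<and> length xs \<le> Suc k)"

lemma wk_0: "wk V E U 0 x y \<longleftrightarrow> x = y \<and> x \<in> U \<and> x \<in> V"
proof
  assume "wk V E U 0 x y"
  then obtain xs where h: "wwalk V E xs" "set xs \<subseteq> U" "hd xs = x" "last xs = y" "length xs \<le> 1"
    unfolding wk_def by auto
  then obtain z where "xs = [z]" unfolding wwalk_def
    by (cases xs) auto
  then show "x = y \<and> x \<in> U \<and> x \<in> V" using h unfolding wwalk_def by auto
next
  assume "x = y \<and> x \<in> U \<and> x \<in> V"
  then show "wk V E U 0 x y" unfolding wk_def wwalk_def
    by (intro exI[of _ "[x]"]) auto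
qed

lemma wk_SucI1: "wk V E U k x y \<Longrightarrow> wk V E U (Suc k) x y"
  unfolding wk_def by fastforce

lemma wk_mono: "wk V E U k x y \<Longrightarrow> k \<le> k' \<Longrightarrow> U \<subseteq> U' \<Longrightarrow> wk V E U' k' x y"
  unfolding wk_def by fastforce

lemma wk_in: "wk V E U k x y \<Longrightarrow> x \<in> U \<and> y \<in> U \<and> x \<in> V \<and> y \<in> V"
  unfolding wk_def wwalk_def by (metis hd_in_set last_in_set subsetD)

lemma wwalk_snoc:
  assumes "wwalk V E xs" "{last xs, y} \<in> E" "y \<in> V"
  shows "wwalk V E (xs @ [y])"
  unfolding wwalk_def
proof (intro conjI allI impI)
  show "xs @ [y] \<noteq> []" by simp
  show "set (xs @ [y]) \<subseteq> V" using assms unfolding wwalk_def by auto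
  fix i assume i: "i + 1 < length (xs @ [y])"
  show "{(xs @ [y]) ! i, (xs @ [y]) ! (i + 1)} \<in> E"
  proof (cases "i + 1 < length xs")
    case True
    then show ?thesis using assms(1) unfolding wwalk_def by (auto simp: nth_append)
  next
    case False
    then have "i + 1 = length xs" using i by simp
    moreover have "xs \<noteq> []" using assms unfolding wwalk_def by auto
    ultimately have "i = length xs - 1" "xs \<noteq> []" by auto
    then show ?thesis using assms(2)
      by (simp add: nth_append last_conv_nth)
  qed
qed

lemma wk_SucI2: "wk V E U k x p \<Longrightarrow> {p, y} \<in> E \<Longrightarrow> y \<in> U \<Longrightarrow> y \<in> V \<Longrightarrow> wk V E U (Suc k) x y"
proof -
  assume a: "wk V E U k x p" "{p, y} \<in> E" "y \<in> U" "y \<in> V"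
  then obtain xs where h: "wwalk V E xs" "set xs \<subseteq> U" "hd xs = x" "last xs = p" "length xs \<le> Suc k"
    unfolding wk_def by auto
  have ne: "xs \<noteq> []" using h unfolding wwalk_def by auto
  show ?thesis unfolding wk_def
    apply (intro exI[of _ "xs @ [y]"])
    using h a ne wwalk_snoc[of V E xs y] by auto
qed

lemma wk_SucE:
  assumes "wk V E U (Suc k) x y"
  shows "wk V E U k x y \<or> (\<exists>p. wk V E U k x p \<and> {p, y} \<in> E \<and> y \<in> U \<and> y \<in> V)"
proof -
  obtain xs where h: "wwalk V E xs" "set xs \<subseteq> U" "hd xs = x" "last xs = y" "length xs \<le> Suc (Suc k)"
    using assms unfolding wk_def by auto
  show ?thesis
  proof (cases "length xs \<le> Suc k")
    case True
    then show ?thesis using h unfolding wk_def by auto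
  next
    case False
    then have len: "length xs = Suc (Suc k)" using h by simp
    define ys where "ys = butlast xs"
    have xs: "xs = ys @ [y]" using h len unfolding ys_def
      by (metis append_butlast_last_id list.size(3) nat.distinct(1))
    have lys: "length ys = Suc k" using len xs by simp
    then have ne: "ys \<noteq> []" by auto
    have wy: "wwalk V E ys" unfolding wwalk_def
    proof (intro conjI allI impI)
      show "ys \<noteq> []" by fact
      show "set ys \<subseteq> V" using h xs unfolding wwalk_def by auto
      fix i assume "i + 1 < length ys"
      then have "{xs ! i, xs ! (i+1)} \<in> E" using h xs unfolding wwalk_def by auto
      then show "{ys ! i, ys ! (i + 1)} \<in> E" using \<open>i + 1 < length ys\<close> xs by (simp add: nth_append)
    qed
    have e: "{xs ! k, xs ! (k+1)} \<in> E" using h len unfolding wwalk_def by auto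
    have "xs ! k = last ys" using xs lys ne by (simp add: nth_append last_conv_nth)
    moreover have "xs ! (k+1) = y" using xs lys by (simp add: nth_append)
    ultimately have e2: "{last ys, y} \<in> E" using e by simp
    have "hd ys = x" using h xs ne by simp
    moreover have "set ys \<subseteq> U" using h xs by auto
    moreover have "y \<in> U" "y \<in> V" using h xs unfolding wwalk_def by auto
    ultimately have "wk V E U k x (last ys)" using wy lys unfolding wk_def by (intro exI[of _ ys]) simp
    then show ?thesis using e2 \<open>y \<in> U\<close> \<open>y \<in> V\<close> by blast
  qed
qed

lemma wk_trans: "wk V E U k x y \<Longrightarrow> wk V E U m y z \<Longrightarrow> wk V E U (k + m) x z"
proof (induction m arbitrary: z)
  case 0
  then show ?case by (simp add: wk_0)
next
  case (Suc m)
  from wk_SucE[OF Suc.prems(2)] show ?case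
  proof
    assume "wk V E U m y z"
    then show ?thesis using Suc by (simp add: wk_SucI1)
  next
    assume "\<exists>p. wk V E U m y p \<and> {p, z} \<in> E \<and> z \<in> U \<and> z \<in> V"
    then obtain p where p: "wk V E U m y p" "{p, z} \<in> E" "z \<in> U" "z \<in> V" by auto
    have "wk V E U (k + m) x p" using Suc.IH[OF Suc.prems(1) p(1)] .
    from wk_SucI2[OF this p(2-4)] show ?thesis by simp
  qed
qed

lemma wk_sym: "wk V E U k x y \<Longrightarrow> wk V E U k y x"
proof (induction k arbitrary: y)
  case 0
  then show ?case by (auto simp add: wk_0)
next
  case (Suc k)
  from wk_SucE[OF Suc.prems] show ?case
  proof
    assume "wk V E U k x y"
    then show ?thesis using Suc by (simp add: wk_SucI1)
  next
    assume "\<exists>p. wk V E U k x p \<and> {p, y} \<in> E \<and> y \<in> U \<and> y \<in> V"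
    then obtain p where p: "wk V E U k x p" "{p, y} \<in> E" "y \<in> U" "y \<in> V" by auto
    have "wk V E U 0 y y" using p by (simp add: wk_0)
    moreover have "{y, p} \<in> E" using p by (simp add: insert_commute)
    moreover have "p \<in> U" "p \<in> V" using wk_in[OF p(1)] by auto
    ultimately have "wk V E U (Suc 0) y p" using wk_SucI2[of V E U 0 y y p] by simp
    from wk_trans[OF this Suc.IH[OF p(1)]] show ?thesis by simp
  qed
qed

lemma reach_imp_wk: "reach_within V E U k x y \<Longrightarrow> wk V E U k x y"
proof -
  assume "reach_within V E U k x y"
  then obtain xs where "is_path V E xs" "set xs \<subseteq> U" "hd xs = x" "last xs = y" "length xs \<le> k + 1"
    unfolding reach_within_def by blast
  moreover then have "wwalk V E xs" unfolding is_path_def wwalk_def by simp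
  ultimately show ?thesis unfolding wk_def by (intro exI[of _ xs]) simp
qed

lemma wk_imp_reach: "wk V E U k x y \<Longrightarrow> reach_within V E U k x y"
proof (induction k arbitrary: y)
  case 0
  then have "x = y" "x \<in> U" "x \<in> V" by (auto simp: wk_0)
  then have "is_path V E [x]" unfolding is_path_def by simp
  then show ?case unfolding reach_within_def using \<open>x = y\<close> \<open>x \<in> U\<close> by (intro exI[of _ "[x]"]) simp
next
  case (Suc k)
  from wk_SucE[OF Suc.prems] show ?case
  proof
    assume "wk V E U k x y"
    then have "reach_within V E U k x y" using Suc.IH by blast
    then obtain xs where "is_path V E xs" "set xs \<subseteq> U" "hd xs = x" "last xs = y" "length xs \<le> Suc k"
      unfolding reach_within_def by auto
    then show ?thesis unfolding reach_within_def by (intro exI[of _ xs]) simp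
  next
    assume "\<exists>p. wk V E U k x p \<and> {p, y} \<in> E \<and> y \<in> U \<and> y \<in> V"
    then obtain p where p: "wk V E U k x p" "{p, y} \<in> E" "y \<in> U" "y \<in> V" by auto
    obtain ps where ps: "is_path V E ps" "set ps \<subseteq> U" "hd ps = x" "last ps = p" "length ps \<le> Suc k"
      using Suc.IH[OF p(1)] unfolding reach_within_def by auto
    show ?thesis
    proof (cases "y \<in> set ps")
      case True
      then obtain ps1 ps2 where sp: "ps = ps1 @ y # ps2" by (meson split_list)
      have "is_path V E (ps1 @ [y])"
        unfolding is_path_def
      proof (intro conjI allI impI)
        show "ps1 @ [y] \<noteq> []" by simp
        show "set (ps1 @ [y]) \<subseteq> V" using ps(1) sp unfolding is_path_def by auto
        show "distinct (ps1 @ [y])" using ps(1) sp unfolding is_path_def by auto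
        fix i assume i: "i + 1 < length (ps1 @ [y])"
        then have "i + 1 < length ps" using sp by simp
        then have "{ps ! i, ps ! (i+1)} \<in> E" using ps(1) unfolding is_path_def by simp
        moreover have "ps ! i = (ps1 @ [y]) ! i" "ps ! (i+1) = (ps1 @ [y]) ! (i+1)"
          using i sp by (auto simp: nth_append)
        ultimately show "{(ps1 @ [y]) ! i, (ps1 @ [y]) ! (i + 1)} \<in> E" by simp
      qed
      moreover have "hd (ps1 @ [y]) = x" using ps(3) sp by (cases ps1) auto
      moreover have "length (ps1 @ [y]) \<le> Suc k + 1" using ps(5) sp by simp
      moreover have "set (ps1 @ [y]) \<subseteq> U" using ps(2) sp by auto
      moreover have "last (ps1 @ [y]) = y" by simp
      ultimately show ?thesis unfolding reach_within_def by blast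
    next
      case False
      have w: "wwalk V E ps" using ps(1) unfolding is_path_def wwalk_def by auto
      have "wwalk V E (ps @ [y])" using wwalk_snoc[OF w] p(2,4) ps(4) by auto
      then have "is_path V E (ps @ [y])" using ps(1) False unfolding is_path_def wwalk_def by auto
      moreover have "hd (ps @ [y]) = x" using ps(1,3) unfolding is_path_def by auto
      moreover have "length (ps @ [y]) \<le> Suc k + 1" using ps(5) by simp
      moreover have "set (ps @ [y]) \<subseteq> U" using ps(2) p(3) by auto
      moreover have "last (ps @ [y]) = y" by simp
      ultimately show ?thesis unfolding reach_within_def by blast
    qed
  qed
qed

lemma reach_iff: "reach_within V E U k x y \<longleftrightarrow> wk V E U k x y"
  using reach_imp_wk wk_imp_reach by metis

lemma wk_seg:
  assumes "wwalk V E xs" "j < length xs" "i \<le> j" "\<forall>k. i \<le> k \<and> k \<le> j \<longrightarrow> xs ! k \<in> U"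
  shows "wk V E U (j - i) (xs ! i) (xs ! j)"
  using assms
proof (induction j)
  case 0
  then show ?case using nth_mem[of 0 xs] unfolding wwalk_def by (auto simp: wk_0)
next
  case (Suc j)
  show ?case
  proof (cases "i = Suc j")
    case True
    then show ?thesis using Suc.prems nth_mem[of "Suc j" xs] unfolding wwalk_def by (auto simp: wk_0)
  next
    case False
    then have ij: "i \<le> j" using Suc.prems by simp
    have ih: "wk V E U (j - i) (xs ! i) (xs ! j)" using Suc.IH Suc.prems ij by auto
    have e: "{xs ! j, xs ! Suc j} \<in> E" using Suc.prems unfolding wwalk_def by auto
    have "xs ! Suc j \<in> V" using Suc.prems nth_mem[of "Suc j" xs] unfolding wwalk_def by auto
    moreover have "xs ! Suc j \<in> U" using Suc.prems by auto
    ultimately have "wk V E U (Suc (j - i)) (xs ! i) (xs ! Suc j)" using wk_SucI2[OF ih e] by auto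
    moreover have "Suc (j - i) = Suc j - i" using ij by simp
    ultimately show ?thesis by simp
  qed
qed

locale XG =
  fixes V :: "'a::linorder set" and E :: "'a set set" and s t :: 'a
  assumes sg: "simple_graph V E" and xp: "X_property V E"
    and sV: "s \<in> V" and tV: "t \<in> V" and st: "s < t"
    and conn: "\<exists>k. reach_within V E V k s t"
begin

abbreviation "Us \<equiv> {v \<in> V. v \<le> t}"
abbreviation "Ut \<equiv> {v \<in> V. s \<le> v}"
abbreviation "dd \<equiv> graph_dist V E s t"

lemma edgeV: "{a, b} \<in> E \<Longrightarrow> a \<in> V \<and> b \<in> V \<and> a \<noteq> b"
proof -
  assume "{a, b} \<in> E"
  then obtain u v where "u \<noteq> v" "u \<in> V" "v \<in> V" "{a, b} = {u, v}"
    using sg unfolding simple_graph_def by blast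
  then show ?thesis by (auto simp: doubleton_eq_iff)
qed

lemma Xp: "p < q \<Longrightarrow> q < r \<Longrightarrow> r < z \<Longrightarrow> {p, r} \<in> E \<Longrightarrow> {q, z} \<in> E \<Longrightarrow> {p, z} \<in> E"
proof -
  assume a: "p < q" "q < r" "r < z" "{p, r} \<in> E" "{q, z} \<in> E"
  have v: "p \<in> V" "q \<in> V" "r \<in> V" "z \<in> V" using edgeV[OF a(4)] edgeV[OF a(5)] by auto
  have H: "\<forall>p\<in>V. \<forall>q\<in>V. \<forall>r\<in>V. \<forall>s\<in>V.
      p < q \<and> q < r \<and> r < s \<and> {p, r} \<in> E \<and> {q, s} \<in> E \<longrightarrow> {p, s} \<in> E"
    using xp unfolding X_property_def .
  show ?thesis using H v a by blast
qed

lemma toV: "wk V E U k x y \<Longrightarrow> wk V E V k x y"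
proof -
  assume "wk V E U k x y"
  then obtain xs where h: "wwalk V E xs" "hd xs = x" "last xs = y" "length xs \<le> Suc k"
    unfolding wk_def by blast
  then have "set xs \<subseteq> V" unfolding wwalk_def by blast
  with h show ?thesis unfolding wk_def by blast
qed

lemma d_reach: "wk V E V dd s t"
proof -
  have "reach_within V E V dd s t" unfolding graph_dist_def using conn by (rule LeastI_ex)
  then show ?thesis by (simp add: reach_iff)
qed

lemma d_min: "wk V E V k s t \<Longrightarrow> dd \<le> k"
  unfolding graph_dist_def by (rule Least_le) (simp add: reach_iff)

lemma short0: "wk V E U i s x \<Longrightarrow> wk V E U' j x t \<Longrightarrow> dd \<le> i + j"
proof -
  assume "wk V E U i s x" "wk V E U' j x t"
  then have "wk V E V i s x" "wk V E V j x t" using toV by blast+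
  from wk_trans[OF this] show ?thesis by (rule d_min)
qed

lemma short: "wk V E U i s x \<Longrightarrow> {x, y} \<in> E \<Longrightarrow> wk V E U' j y t \<Longrightarrow> dd \<le> i + 1 + j"
proof -
  assume a: "wk V E U i s x" "{x, y} \<in> E" "wk V E U' j y t"
  have "wk V E V (Suc i) s y" using wk_SucI2[OF toV[OF a(1)] a(2)] edgeV[OF a(2)] by simp
  from short0[OF this a(3)] show ?thesis by simp
qed

lemma finW: "finite {y. wk V E U k x y}"
proof -
  have "finite V" using sg unfolding simple_graph_def by (rule conjunct1)
  moreover have "{y. wk V E U k x y} \<subseteq> V"
  proof
    fix y assume "y \<in> {y. wk V E U k x y}"
    then have "wk V E U k x y" by simp
    from wk_in[OF this] show "y \<in> V" by simp
  qed
  ultimately show ?thesis by (rule finite_subset[rotated])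
qed

lemma sS: "wk V E Us k s s"
proof -
  have "wk V E Us 0 s s" using sV st by (simp add: wk_0)
  from wk_mono[OF this, of k Us] show ?thesis by simp
qed

lemma tT: "wk V E Ut k t t"
proof -
  have "wk V E Ut 0 t t" using tV st by (simp add: wk_0)
  from wk_mono[OF this, of k Ut] show ?thesis by simp
qed

lemma S_mem: "wk V E Us k s y \<Longrightarrow> alpha_s V E s t k \<le> y \<and> y \<le> beta_s V E s t k"
  unfolding alpha_s_def beta_s_def reach_iff using finW[of Us k s] by auto

lemma S_ex: "wk V E Us k s (alpha_s V E s t k) \<and> wk V E Us k s (beta_s V E s t k)"
proof -
  have ne: "{y. wk V E Us k s y} \<noteq> {}" using sS by blast
  show ?thesis unfolding alpha_s_def beta_s_def reach_iff
    using Min_in[OF finW ne] Max_in[OF finW ne] by blast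
qed

lemma T_mem: "wk V E Ut k t y \<Longrightarrow> y \<le> alpha_t V E s t k \<and> beta_t V E s t k \<le> y"
  unfolding alpha_t_def beta_t_def reach_iff using finW[of Ut k t] by auto

lemma T_ex: "wk V E Ut k t (alpha_t V E s t k) \<and> wk V E Ut k t (beta_t V E s t k)"
proof -
  have ne: "{y. wk V E Ut k t y} \<noteq> {}" using tT by blast
  show ?thesis unfolding alpha_t_def beta_t_def reach_iff
    using Min_in[OF finW ne] Max_in[OF finW ne] by blast
qed

lemma B0: "beta_s V E s t 0 = s"
  using S_ex[of 0] by (simp add: wk_0)

lemma C0: "beta_t V E s t 0 = t"
  using T_ex[of 0] by (simp add: wk_0)

lemma B_mono: "k \<le> k' \<Longrightarrow> beta_s V E s t k \<le> beta_s V E s t k'"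
proof -
  assume "k \<le> k'"
  from wk_mono[OF conjunct2[OF S_ex[of k]] this order_refl] show ?thesis using S_mem by blast
qed

lemma C_anti: "k \<le> k' \<Longrightarrow> beta_t V E s t k' \<le> beta_t V E s t k"
proof -
  assume "k \<le> k'"
  from wk_mono[OF conjunct2[OF T_ex[of k]] this order_refl] show ?thesis using T_mem by blast
qed

lemma cross_up:
  assumes "wk V E U k a b" "a < x" "x < b"
  shows "(\<exists>i. i + 1 \<le> k \<and> wk V E U i a x) \<or>
    (\<exists>c e i i'. {c, e} \<in> E \<and> c < x \<and> x < e \<and> wk V E U i a c \<and> i \<le> k \<and> (c = b \<or> i + 1 \<le> k)
       \<and> wk V E U i' a e \<and> i' \<le> k \<and> (e = b \<or> i' + 1 \<le> k))"
  using assms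
proof (induction k arbitrary: b)
  case 0
  then show ?case by (simp add: wk_0)
next
  case (Suc k)
  from wk_SucE[OF Suc.prems(1)] show ?case
  proof
    assume h: "wk V E U k a b"
    from Suc.IH[OF h Suc.prems(2,3)] show ?thesis
    proof
      assume "\<exists>i. i + 1 \<le> k \<and> wk V E U i a x"
      then show ?thesis by auto
    next
      assume "\<exists>c e i i'. {c, e} \<in> E \<and> c < x \<and> x < e \<and> wk V E U i a c \<and> i \<le> k \<and> (c = b \<or> i + 1 \<le> k)
       \<and> wk V E U i' a e \<and> i' \<le> k \<and> (e = b \<or> i' + 1 \<le> k)"
      then obtain c e i i' where "{c, e} \<in> E" "c < x" "x < e" "wk V E U i a c" "i \<le> k" "c = b \<or> i + 1 \<le> k"
       "wk V E U i' a e" "i' \<le> k" "e = b \<or> i' + 1 \<le> k" by blast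
      then show ?thesis by (intro disjI2 exI[of _ c] exI[of _ e] exI[of _ i] exI[of _ i']) auto
    qed
  next
    assume "\<exists>p. wk V E U k a p \<and> {p, b} \<in> E \<and> b \<in> U \<and> b \<in> V"
    then obtain p where p: "wk V E U k a p" "{p, b} \<in> E" "b \<in> U" "b \<in> V" by blast
    consider "p = x" | "p < x" | "x < p" by fastforce
    then show ?thesis
    proof cases
      case 1
      then show ?thesis using p by auto
    next
      case 2
      then show ?thesis using p Suc.prems
        by (intro disjI2 exI[of _ p] exI[of _ b] exI[of _ k] exI[of _ "Suc k"]) auto
    next
      case 3
      from Suc.IH[OF p(1) Suc.prems(2) 3] show ?thesis
      proof
        assume "\<exists>i. i + 1 \<le> k \<and> wk V E U i a x"
        then show ?thesis by auto
      next
        assume "\<exists>c e i i'. {c, e} \<in> E \<and> c < x \<and> x < e \<and> wk V E U i a c \<and> i \<le> k \<and> (c = p \<or> i + 1 \<le> k)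
         \<and> wk V E U i' a e \<and> i' \<le> k \<and> (e = p \<or> i' + 1 \<le> k)"
        then obtain c e i i' where "{c, e} \<in> E" "c < x" "x < e" "wk V E U i a c" "i \<le> k"
         "wk V E U i' a e" "i' \<le> k" by blast
        then show ?thesis by (intro disjI2 exI[of _ c] exI[of _ e] exI[of _ i] exI[of _ i']) auto
      qed
    qed
  qed
qed

lemma cross_down:
  assumes "wk V E U k a b" "x < a" "b < x"
  shows "(\<exists>i. i + 1 \<le> k \<and> wk V E U i a x) \<or>
    (\<exists>c e i i'. {c, e} \<in> E \<and> c < x \<and> x < e \<and> wk V E U i a c \<and> i \<le> k \<and> (c = b \<or> i + 1 \<le> k)
       \<and> wk V E U i' a e \<and> i' \<le> k \<and> (e = b \<or> i' + 1 \<le> k))"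
  using assms
proof (induction k arbitrary: b)
  case 0
  then show ?case by (simp add: wk_0)
next
  case (Suc k)
  from wk_SucE[OF Suc.prems(1)] show ?case
  proof
    assume h: "wk V E U k a b"
    from Suc.IH[OF h Suc.prems(2,3)] show ?thesis
    proof
      assume "\<exists>i. i + 1 \<le> k \<and> wk V E U i a x"
      then show ?thesis by auto
    next
      assume "\<exists>c e i i'. {c, e} \<in> E \<and> c < x \<and> x < e \<and> wk V E U i a c \<and> i \<le> k \<and> (c = b \<or> i + 1 \<le> k)
       \<and> wk V E U i' a e \<and> i' \<le> k \<and> (e = b \<or> i' + 1 \<le> k)"
      then obtain c e i i' where "{c, e} \<in> E" "c < x" "x < e" "wk V E U i a c" "i \<le> k" "c = b \<or> i + 1 \<le> k"
       "wk V E U i' a e" "i' \<le> k" "e = b \<or> i' + 1 \<le> k" by blast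
      then show ?thesis by (intro disjI2 exI[of _ c] exI[of _ e] exI[of _ i] exI[of _ i']) auto
    qed
  next
    assume "\<exists>p. wk V E U k a p \<and> {p, b} \<in> E \<and> b \<in> U \<and> b \<in> V"
    then obtain p where p: "wk V E U k a p" "{p, b} \<in> E" "b \<in> U" "b \<in> V" by blast
    consider "p = x" | "x < p" | "p < x" by fastforce
    then show ?thesis
    proof cases
      case 1
      then show ?thesis using p by auto
    next
      case 2
      have e: "{b, p} \<in> E" using p(2) by (simp add: insert_commute)
      then show ?thesis using p Suc.prems 2
        by (intro disjI2 exI[of _ b] exI[of _ p] exI[of _ "Suc k"] exI[of _ k]) auto
    next
      case 3
      from Suc.IH[OF p(1) Suc.prems(2) 3] show ?thesis
      proof
        assume "\<exists>i. i + 1 \<le> k \<and> wk V E U i a x"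
        then show ?thesis by auto
      next
        assume "\<exists>c e i i'. {c, e} \<in> E \<and> c < x \<and> x < e \<and> wk V E U i a c \<and> i \<le> k \<and> (c = p \<or> i + 1 \<le> k)
         \<and> wk V E U i' a e \<and> i' \<le> k \<and> (e = p \<or> i' + 1 \<le> k)"
        then obtain c e i i' where "{c, e} \<in> E" "c < x" "x < e" "wk V E U i a c" "i \<le> k"
         "wk V E U i' a e" "i' \<le> k" by blast
        then show ?thesis by (intro disjI2 exI[of _ c] exI[of _ e] exI[of _ i] exI[of _ i']) auto
      qed
    qed
  qed
qed

end

context XG begin

abbreviation "bs \<equiv> beta_s V E s t"
abbreviation "bt \<equiv> beta_t V E s t"
abbreviation "as \<equiv> alpha_s V E s t"
abbreviation "at \<equiv> alpha_t V E s t"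

lemma inUs: "wk V E Us k s x \<Longrightarrow> x \<in> V \<and> x \<le> t"
  using wk_in[of V E Us k s x] by simp

lemma inUt: "wk V E Ut k t x \<Longrightarrow> x \<in> V \<and> s \<le> x"
  using wk_in[of V E Ut k t x] by simp

lemma lemI:
  assumes "\<sigma> \<le> dd" "bt (dd - \<sigma>) \<le> bs \<sigma>"
  shows "\<exists>\<sigma>'. \<sigma>' \<le> dd \<and> bs \<sigma>' = bt (dd - \<sigma>')"
proof -
  define P where "P \<sigma> \<longleftrightarrow> \<sigma> \<le> dd \<and> bt (dd - \<sigma>) \<le> bs \<sigma>" for \<sigma>
  define \<sigma>0 where "\<sigma>0 = (LEAST \<sigma>. P \<sigma>)"
  have "P \<sigma>" using assms unfolding P_def by simp
  then have P0: "P \<sigma>0" unfolding \<sigma>0_def by (rule LeastI)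
  have mn: "\<not> P \<sigma>" if "\<sigma> < \<sigma>0" for \<sigma> using not_less_Least[of \<sigma> P] that unfolding \<sigma>0_def by simp
  show ?thesis
  proof (rule ccontr)
    assume ne: "\<not> ?thesis"
    have s0: "\<sigma>0 \<le> dd" using P0 unfolding P_def by simp
    have "bt (dd - \<sigma>0) \<noteq> bs \<sigma>0"
    proof
      assume "bt (dd - \<sigma>0) = bs \<sigma>0"
      then have "\<exists>\<sigma>'. \<sigma>' \<le> dd \<and> bs \<sigma>' = bt (dd - \<sigma>')" using s0 by (intro exI[of _ \<sigma>0]) simp
      then show False using ne by simp
    qed
    moreover have "bt (dd - \<sigma>0) \<le> bs \<sigma>0" using P0 unfolding P_def by simp
    ultimately have wu: "bt (dd - \<sigma>0) < bs \<sigma>0" by simp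
    have wT: "wk V E Ut (dd - \<sigma>0) t (bt (dd - \<sigma>0))" using T_ex[of "dd - \<sigma>0"] by simp
    have sw: "s \<le> bt (dd - \<sigma>0)" using inUt[OF wT] by simp
    have "\<sigma>0 \<noteq> 0"
    proof
      assume "\<sigma>0 = 0"
      then have "bs \<sigma>0 = s" using B0 by simp
      then show False using wu sw by simp
    qed
    then obtain \<sigma>1 where s1: "\<sigma>0 = Suc \<sigma>1" using not0_implies_Suc by blast
    have "\<not> P \<sigma>1" using mn s1 by simp
    then have h1: "bs \<sigma>1 < bt (dd - \<sigma>1)" using s0 s1 unfolding P_def by simp
    have "bt (dd - \<sigma>1) \<le> bt (dd - \<sigma>0)" using C_anti s1 s0 by simp
    then have h2: "bs \<sigma>1 < bt (dd - \<sigma>0)" using h1 by simp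
    have wSu: "wk V E Us (Suc \<sigma>1) s (bs \<sigma>0)" using S_ex[of \<sigma>0] s1 by simp
    have ut: "bs \<sigma>0 < t"
    proof -
      have "bs \<sigma>0 \<le> t" using inUs[OF wSu] by simp
      moreover have "bs \<sigma>0 \<noteq> t"
      proof
        assume u: "bs \<sigma>0 = t"
        have "wk V E Us \<sigma>0 s t" using wSu u s1 by simp
        from short0[OF this tT[of 0]] have "dd \<le> \<sigma>0" by simp
        then have "\<sigma>0 = dd" using s0 by simp
        then have "bt (dd - \<sigma>0) = t" using C0 by simp
        then show False using wu u by simp
      qed
      ultimately show ?thesis by simp
    qed
    from wk_SucE[OF wSu] show False
    proof
      assume "wk V E Us \<sigma>1 s (bs \<sigma>0)"
      then have "bs \<sigma>0 \<le> bs \<sigma>1" using S_mem[of \<sigma>1 "bs \<sigma>0"] by simp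
      then show False using h2 wu by simp
    next
      assume "\<exists>p. wk V E Us \<sigma>1 s p \<and> {p, bs \<sigma>0} \<in> E \<and> bs \<sigma>0 \<in> Us \<and> bs \<sigma>0 \<in> V"
      then obtain p where p: "wk V E Us \<sigma>1 s p" "{p, bs \<sigma>0} \<in> E" by blast
      have pw: "p < bt (dd - \<sigma>0)" using conjunct2[OF S_mem[OF p(1)]] h2 by order
      from cross_down[OF wT ut wu] show False
      proof
        assume "\<exists>i. i + 1 \<le> dd - \<sigma>0 \<and> wk V E Ut i t (bs \<sigma>0)"
        then obtain i where i: "i + 1 \<le> dd - \<sigma>0" "wk V E Ut i t (bs \<sigma>0)" by blast
        have "dd \<le> Suc \<sigma>1 + i" using short0[OF wSu wk_sym[OF i(2)]] .
        then show False using i(1) s1 s0 by simp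
      next
        assume "\<exists>c e i i'. {c, e} \<in> E \<and> c < bs \<sigma>0 \<and> bs \<sigma>0 < e \<and> wk V E Ut i t c \<and> i \<le> dd - \<sigma>0
          \<and> (c = bt (dd - \<sigma>0) \<or> i + 1 \<le> dd - \<sigma>0)
          \<and> wk V E Ut i' t e \<and> i' \<le> dd - \<sigma>0 \<and> (e = bt (dd - \<sigma>0) \<or> i' + 1 \<le> dd - \<sigma>0)"
        then obtain c e i i' where ce: "{c, e} \<in> E" "c < bs \<sigma>0" "bs \<sigma>0 < e" "wk V E Ut i t c" "i \<le> dd - \<sigma>0"
          "wk V E Ut i' t e" "e = bt (dd - \<sigma>0) \<or> i' + 1 \<le> dd - \<sigma>0" by blast
        have "wk V E Ut (dd - \<sigma>0) t c" using wk_mono[OF ce(4) ce(5) order_refl] .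
        then have wc: "bt (dd - \<sigma>0) \<le> c" using T_mem[of "dd - \<sigma>0" c] by simp
        have i': "i' + 1 \<le> dd - \<sigma>0" using ce(3,7) wu by auto
        have pc: "p < c" using pw wc by simp
        have "{p, e} \<in> E" using Xp[OF pc ce(2) ce(3) p(2) ce(1)] .
        from short[OF p(1) this wk_sym[OF ce(6)]] have "dd \<le> \<sigma>1 + 1 + i'" .
        then show False using i' s1 s0 by simp
      qed
    qed
  qed
qed

lemma sep:
  assumes H: "\<forall>\<sigma>\<le>dd. bs \<sigma> < bt (dd - \<sigma>)" and "\<sigma> + \<tau> \<le> dd"
    and "wk V E Us \<sigma> s x" "wk V E Ut \<tau> t y"
  shows "x < y"
proof -
  have "x \<le> bs \<sigma>" using S_mem[OF assms(3)] by simp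
  also have "bs \<sigma> < bt (dd - \<sigma>)" using H assms(2) by simp
  also have "bt (dd - \<sigma>) \<le> bt \<tau>" using C_anti assms(2) by simp
  also have "bt \<tau> \<le> y" using T_mem[OF assms(4)] by simp
  finally show ?thesis .
qed

end

context XG begin

lemma lemA:
  assumes wa: "wk V E Us \<sigma> s a" and wb: "wk V E Ut \<tau> t b" and ab: "{a, b} \<in> E"
    and as: "a < s" and tb: "t < b" and sd: "\<sigma> + \<tau> + 1 = dd"
  shows "{as \<sigma>, at \<tau>} \<in> E"
proof -
  have wal: "wk V E Us \<sigma> s (as \<sigma>)" using S_ex[of \<sigma>] by simp
  have ala: "as \<sigma> \<le> a" using S_mem[OF wa] by simp
  have bt': "wk V E V \<tau> b t" using toV[OF wk_sym[OF wb]] .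
  have e1: "{as \<sigma>, b} \<in> E"
  proof (cases "as \<sigma> = a")
    case True
    then show ?thesis using ab by simp
  next
    case False
    then have lt: "as \<sigma> < a" using ala by simp
    from cross_down[OF wal as lt] show ?thesis
    proof
      assume "\<exists>i. i + 1 \<le> \<sigma> \<and> wk V E Us i s a"
      then obtain i where i: "i + 1 \<le> \<sigma>" "wk V E Us i s a" by blast
      from short[OF i(2) ab bt'] have "dd \<le> i + 1 + \<tau>" .
      then show ?thesis using i(1) sd by simp
    next
      assume "\<exists>c e i i'. {c, e} \<in> E \<and> c < a \<and> a < e \<and> wk V E Us i s c \<and> i \<le> \<sigma>
          \<and> (c = as \<sigma> \<or> i + 1 \<le> \<sigma>)
          \<and> wk V E Us i' s e \<and> i' \<le> \<sigma> \<and> (e = as \<sigma> \<or> i' + 1 \<le> \<sigma>)"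
      then obtain c e i i' where ce: "{c, e} \<in> E" "c < a" "a < e" "wk V E Us i s c"
          "c = as \<sigma> \<or> i + 1 \<le> \<sigma>" "wk V E Us i' s e" by blast
      have "e \<le> t" using inUs[OF ce(6)] by simp
      then have eb: "e < b" using tb by order
      have cb: "{c, b} \<in> E" using Xp[OF ce(2) ce(3) eb ce(1) ab] .
      have "c = as \<sigma>"
      proof (rule ccontr)
        assume "c \<noteq> as \<sigma>"
        then have "i + 1 \<le> \<sigma>" using ce(5) by simp
        moreover from short[OF ce(4) cb bt'] have "dd \<le> i + 1 + \<tau>" .
        ultimately show False using sd by simp
      qed
      then show ?thesis using cb by simp
    qed
  qed
  have wat: "wk V E Ut \<tau> t (at \<tau>)" using T_ex[of \<tau>] by simp
  have bat: "b \<le> at \<tau>" using T_mem[OF wb] by simp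
  show ?thesis
  proof (cases "at \<tau> = b")
    case True
    then show ?thesis using e1 by simp
  next
    case False
    then have lt: "b < at \<tau>" using bat by simp
    from cross_up[OF wat tb lt] show ?thesis
    proof
      assume "\<exists>i. i + 1 \<le> \<tau> \<and> wk V E Ut i t b"
      then obtain i where i: "i + 1 \<le> \<tau>" "wk V E Ut i t b" by blast
      from short[OF wa ab wk_sym[OF i(2)]] have "dd \<le> \<sigma> + 1 + i" .
      then show ?thesis using i(1) sd by simp
    next
      assume "\<exists>c e i i'. {c, e} \<in> E \<and> c < b \<and> b < e \<and> wk V E Ut i t c \<and> i \<le> \<tau>
          \<and> (c = at \<tau> \<or> i + 1 \<le> \<tau>)
          \<and> wk V E Ut i' t e \<and> i' \<le> \<tau> \<and> (e = at \<tau> \<or> i' + 1 \<le> \<tau>)"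
      then obtain c e i i' where ce: "{c, e} \<in> E" "c < b" "b < e" "wk V E Ut i t c"
          "wk V E Ut i' t e" "e = at \<tau> \<or> i' + 1 \<le> \<tau>" by blast
      have "s \<le> c" using inUt[OF ce(4)] by simp
      then have ac: "as \<sigma> < c" using ala as by order
      have ae: "{as \<sigma>, e} \<in> E" using Xp[OF ac ce(2) ce(3) e1 ce(1)] .
      have "e = at \<tau>"
      proof (rule ccontr)
        assume "e \<noteq> at \<tau>"
        then have "i' + 1 \<le> \<tau>" using ce(6) by simp
        moreover from short[OF wal ae wk_sym[OF ce(5)]] have "dd \<le> \<sigma> + 1 + i'" .
        ultimately show False using sd by simp
      qed
      then show ?thesis using ae by simp
    qed
  qed
qed

lemma lemB1:
  assumes wv: "wk V E Us \<sigma> s v0" and vy: "{v0, y} \<in> E" and ty: "t < y"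
    and wy: "wk V E V j y t" and sd: "\<sigma> + 1 + j = dd"
  shows "\<exists>v. (v = as \<sigma> \<or> v = bs \<sigma>) \<and> {v, y} \<in> E"
proof -
  have key: "\<sigma> \<le> i" if "wk V E Us i s c" "{c, y} \<in> E" for i c
  proof -
    from short[OF that wy] have "dd \<le> i + 1 + j" .
    then show ?thesis using sd by simp
  qed
  show ?thesis
  proof (cases "v0 < s")
    case True
    have wal: "wk V E Us \<sigma> s (as \<sigma>)" using S_ex[of \<sigma>] by simp
    have ala: "as \<sigma> \<le> v0" using S_mem[OF wv] by simp
    show ?thesis
    proof (cases "as \<sigma> = v0")
      case True
      then show ?thesis using vy by blast
    next
      case False
      then have lt: "as \<sigma> < v0" using ala by simp
      from cross_down[OF wal True lt] show ?thesis
      proof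
        assume "\<exists>i. i + 1 \<le> \<sigma> \<and> wk V E Us i s v0"
        then obtain i where i: "i + 1 \<le> \<sigma>" "wk V E Us i s v0" by blast
        from key[OF i(2) vy] i(1) show ?thesis by simp
      next
        assume "\<exists>c e i i'. {c, e} \<in> E \<and> c < v0 \<and> v0 < e \<and> wk V E Us i s c \<and> i \<le> \<sigma>
            \<and> (c = as \<sigma> \<or> i + 1 \<le> \<sigma>)
            \<and> wk V E Us i' s e \<and> i' \<le> \<sigma> \<and> (e = as \<sigma> \<or> i' + 1 \<le> \<sigma>)"
        then obtain c e i i' where ce: "{c, e} \<in> E" "c < v0" "v0 < e" "wk V E Us i s c"
            "c = as \<sigma> \<or> i + 1 \<le> \<sigma>" "wk V E Us i' s e" by blast
        have "e \<le> t" using inUs[OF ce(6)] by simp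
        then have ey: "e < y" using ty by order
        have cy: "{c, y} \<in> E" using Xp[OF ce(2) ce(3) ey ce(1) vy] .
        have "c = as \<sigma>" using key[OF ce(4) cy] ce(5) by simp
        then show ?thesis using cy by blast
      qed
    qed
  next
    case False
    then have sv: "s \<le> v0" by simp
    have wbe: "wk V E Us \<sigma> s (bs \<sigma>)" using S_ex[of \<sigma>] by simp
    have vb: "v0 \<le> bs \<sigma>" using S_mem[OF wv] by simp
    show ?thesis
    proof (cases "bs \<sigma> = v0")
      case True
      then show ?thesis using vy by blast
    next
      case False
      then have lt: "v0 < bs \<sigma>" using vb by simp
      have "v0 \<noteq> s"
      proof
        assume "v0 = s"
        then have "\<sigma> \<le> 0" using key[OF sS[of 0]] vy by simp
        then have "bs \<sigma> = s" using B0 by simp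
        then show False using lt \<open>v0 = s\<close> by simp
      qed
      then have sv': "s < v0" using sv by simp
      from cross_up[OF wbe sv' lt] show ?thesis
      proof
        assume "\<exists>i. i + 1 \<le> \<sigma> \<and> wk V E Us i s v0"
        then obtain i where i: "i + 1 \<le> \<sigma>" "wk V E Us i s v0" by blast
        from key[OF i(2) vy] i(1) show ?thesis by simp
      next
        assume "\<exists>c e i i'. {c, e} \<in> E \<and> c < v0 \<and> v0 < e \<and> wk V E Us i s c \<and> i \<le> \<sigma>
            \<and> (c = bs \<sigma> \<or> i + 1 \<le> \<sigma>)
            \<and> wk V E Us i' s e \<and> i' \<le> \<sigma> \<and> (e = bs \<sigma> \<or> i' + 1 \<le> \<sigma>)"
        then obtain c e i i' where ce: "{c, e} \<in> E" "c < v0" "v0 < e" "wk V E Us i s c"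
            "c = bs \<sigma> \<or> i + 1 \<le> \<sigma>" "wk V E Us i' s e" by blast
        have "c \<noteq> bs \<sigma>" using ce(2) lt by simp
        then have i1: "i + 1 \<le> \<sigma>" using ce(5) by simp
        have "e \<le> t" using inUs[OF ce(6)] by simp
        then have ey: "e < y" using ty by order
        have cy: "{c, y} \<in> E" using Xp[OF ce(2) ce(3) ey ce(1) vy] .
        from key[OF ce(4) cy] i1 show ?thesis by simp
      qed
    qed
  qed
qed

lemma lemB2:
  assumes ww: "wk V E Ut \<tau> t w0" and zw: "{z, w0} \<in> E" and zs: "z < s"
    and wz: "wk V E V j s z" and sd: "j + 1 + \<tau> = dd"
  shows "\<exists>w. (w = at \<tau> \<or> w = bt \<tau>) \<and> {z, w} \<in> E"
proof -
  have key: "\<tau> \<le> i" if "wk V E Ut i t c" "{z, c} \<in> E" for i c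
  proof -
    from short[OF wz that(2) wk_sym[OF that(1)]] have "dd \<le> j + 1 + i" .
    then show ?thesis using sd by simp
  qed
  show ?thesis
  proof (cases "t < w0")
    case True
    have wat: "wk V E Ut \<tau> t (at \<tau>)" using T_ex[of \<tau>] by simp
    have wa: "w0 \<le> at \<tau>" using T_mem[OF ww] by simp
    show ?thesis
    proof (cases "at \<tau> = w0")
      case True
      then show ?thesis using zw by blast
    next
      case False
      then have lt: "w0 < at \<tau>" using wa by simp
      from cross_up[OF wat True lt] show ?thesis
      proof
        assume "\<exists>i. i + 1 \<le> \<tau> \<and> wk V E Ut i t w0"
        then obtain i where i: "i + 1 \<le> \<tau>" "wk V E Ut i t w0" by blast
        from key[OF i(2) zw] i(1) show ?thesis by simp
      next
        assume "\<exists>c e i i'. {c, e} \<in> E \<and> c < w0 \<and> w0 < e \<and> wk V E Ut i t c \<and> i \<le> \<tau>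
            \<and> (c = at \<tau> \<or> i + 1 \<le> \<tau>)
            \<and> wk V E Ut i' t e \<and> i' \<le> \<tau> \<and> (e = at \<tau> \<or> i' + 1 \<le> \<tau>)"
        then obtain c e i i' where ce: "{c, e} \<in> E" "c < w0" "w0 < e" "wk V E Ut i t c"
            "wk V E Ut i' t e" "e = at \<tau> \<or> i' + 1 \<le> \<tau>" by blast
        have "s \<le> c" using inUt[OF ce(4)] by simp
        then have zc: "z < c" using zs by order
        have ze: "{z, e} \<in> E" using Xp[OF zc ce(2) ce(3) zw ce(1)] .
        have "e = at \<tau>" using key[OF ce(5) ze] ce(6) by simp
        then show ?thesis using ze by blast
      qed
    qed
  next
    case False
    then have wt: "w0 \<le> t" by simp
    have wbe: "wk V E Ut \<tau> t (bt \<tau>)" using T_ex[of \<tau>] by simp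
    have bw: "bt \<tau> \<le> w0" using T_mem[OF ww] by simp
    show ?thesis
    proof (cases "bt \<tau> = w0")
      case True
      then show ?thesis using zw by blast
    next
      case False
      then have lt: "bt \<tau> < w0" using bw by simp
      have "w0 \<noteq> t"
      proof
        assume "w0 = t"
        then have "\<tau> \<le> 0" using key[OF tT[of 0]] zw by simp
        then have "bt \<tau> = t" using C0 by simp
        then show False using lt \<open>w0 = t\<close> by simp
      qed
      then have wt': "w0 < t" using wt by simp
      from cross_down[OF wbe wt' lt] show ?thesis
      proof
        assume "\<exists>i. i + 1 \<le> \<tau> \<and> wk V E Ut i t w0"
        then obtain i where i: "i + 1 \<le> \<tau>" "wk V E Ut i t w0" by blast
        from key[OF i(2) zw] i(1) show ?thesis by simp
      next
        assume "\<exists>c e i i'. {c, e} \<in> E \<and> c < w0 \<and> w0 < e \<and> wk V E Ut i t c \<and> i \<le> \<tau>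
            \<and> (c = bt \<tau> \<or> i + 1 \<le> \<tau>)
            \<and> wk V E Ut i' t e \<and> i' \<le> \<tau> \<and> (e = bt \<tau> \<or> i' + 1 \<le> \<tau>)"
        then obtain c e i i' where ce: "{c, e} \<in> E" "c < w0" "w0 < e" "wk V E Ut i t c"
            "wk V E Ut i' t e" "e = bt \<tau> \<or> i' + 1 \<le> \<tau>" by blast
        have "e \<noteq> bt \<tau>" using ce(3) lt by simp
        then have i1: "i' + 1 \<le> \<tau>" using ce(6) by simp
        have "s \<le> c" using inUt[OF ce(4)] by simp
        then have zc: "z < c" using zs by order
        have ze: "{z, e} \<in> E" using Xp[OF zc ce(2) ce(3) zw ce(1)] .
        from key[OF ce(5) ze] i1 show ?thesis by simp
      qed
    qed
  qed
qed

end

context XG begin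

lemma Bfin:
  assumes H: "\<forall>\<sigma>\<le>dd. bs \<sigma> < bt (dd - \<sigma>)"
    and wv: "wk V E Us \<sigma> s v" and vy: "{v, y} \<in> E" and ty: "t < y"
    and ww: "wk V E Ut \<tau> t w" and zw: "{z, w} \<in> E" and zs: "z < s"
    and sd: "\<sigma> + \<tau> + 3 \<le> dd"
  shows "\<sigma> + \<tau> + 3 = dd \<and> v < w \<and> t \<le> rhorizon V E v \<and> lhorizon V E w \<le> s"
proof -
  have sd': "\<sigma> + \<tau> \<le> dd" using sd by simp
  have vw: "v < w" using sep[OF H sd' wv ww] .
  have wt: "wk V E Ut \<tau> w t" using wk_sym[OF ww] .
  have zv: "z < v"
  proof -
    have "v \<noteq> z"
    proof
      assume "v = z"
      then have "dd \<le> \<sigma> + 1 + \<tau>" using short[OF wv _ wt] zw by simp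
      then show False using sd by simp
    qed
    moreover have "\<not> v < z"
    proof
      assume vz: "v < z"
      from cross_down[OF wv zs vz] show False
      proof
        assume "\<exists>i. i + 1 \<le> \<sigma> \<and> wk V E Us i s z"
        then obtain i where i: "i + 1 \<le> \<sigma>" "wk V E Us i s z" by blast
        from short[OF i(2) zw wt] have "dd \<le> i + 1 + \<tau>" .
        then show False using i(1) sd by simp
      next
        assume "\<exists>c e i i'. {c, e} \<in> E \<and> c < z \<and> z < e \<and> wk V E Us i s c \<and> i \<le> \<sigma>
            \<and> (c = v \<or> i + 1 \<le> \<sigma>)
            \<and> wk V E Us i' s e \<and> i' \<le> \<sigma> \<and> (e = v \<or> i' + 1 \<le> \<sigma>)"
        then obtain c e i i' where ce: "{c, e} \<in> E" "c < z" "z < e" "wk V E Us i s c" "i \<le> \<sigma>"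
            "wk V E Us i' s e" "i' \<le> \<sigma>" by blast
        have "wk V E Us \<sigma> s e" using wk_mono[OF ce(6) ce(7) order_refl] .
        then have ew: "e < w" using sep[OF H sd' _ ww] by simp
        have cw: "{c, w} \<in> E" using Xp[OF ce(2) ce(3) ew ce(1) zw] .
        from short[OF ce(4) cw wt] have "dd \<le> i + 1 + \<tau>" .
        then show False using ce(5) sd by simp
      qed
    qed
    ultimately show ?thesis by order
  qed
  have wy: "w < y"
  proof -
    have "w \<noteq> y"
    proof
      assume "w = y"
      then have "dd \<le> \<sigma> + 1 + \<tau>" using short[OF wv vy] wt by simp
      then show False using sd by simp
    qed
    moreover have "\<not> y < w"
    proof
      assume yw: "y < w"
      from cross_up[OF ww ty yw] show False
      proof
        assume "\<exists>i. i + 1 \<le> \<tau> \<and> wk V E Ut i t y"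
        then obtain i where i: "i + 1 \<le> \<tau>" "wk V E Ut i t y" by blast
        from short[OF wv vy wk_sym[OF i(2)]] have "dd \<le> \<sigma> + 1 + i" .
        then show False using i(1) sd by simp
      next
        assume "\<exists>c e i i'. {c, e} \<in> E \<and> c < y \<and> y < e \<and> wk V E Ut i t c \<and> i \<le> \<tau>
            \<and> (c = w \<or> i + 1 \<le> \<tau>)
            \<and> wk V E Ut i' t e \<and> i' \<le> \<tau> \<and> (e = w \<or> i' + 1 \<le> \<tau>)"
        then obtain c e i i' where ce: "{c, e} \<in> E" "c < y" "y < e" "wk V E Ut i t c" "i \<le> \<tau>"
            "wk V E Ut i' t e" "i' \<le> \<tau>" by blast
        have "wk V E Ut \<tau> t c" using wk_mono[OF ce(4) ce(5) order_refl] .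
        then have vc: "v < c" using sep[OF H sd' wv] by simp
        have ve: "{v, e} \<in> E" using Xp[OF vc ce(2) ce(3) vy ce(1)] .
        from short[OF wv ve wk_sym[OF ce(6)]] have "dd \<le> \<sigma> + 1 + i'" .
        then show False using ce(7) sd by simp
      qed
    qed
    ultimately show ?thesis by order
  qed
  have zy: "{z, y} \<in> E" using Xp[OF zv vw wy zw vy] .
  have w1: "wk V E V (Suc \<sigma>) s y" using wk_SucI2[OF toV[OF wv] vy] edgeV[OF vy] by simp
  have yz: "{y, z} \<in> E" using zy by (simp add: insert_commute)
  have w2: "wk V E V (Suc (Suc \<sigma>)) s z" using wk_SucI2[OF w1 yz] edgeV[OF yz] by simp
  have "dd \<le> Suc (Suc \<sigma>) + 1 + \<tau>" using short[OF w2 zw wt] .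
  then have eq: "\<sigma> + \<tau> + 3 = dd" using sd by simp
  have fin: "finite (insert x {u \<in> V. {u, x} \<in> E})" for x
  proof -
    have "finite V" using sg unfolding simple_graph_def by (rule conjunct1)
    then show ?thesis by simp
  qed
  have "y \<in> insert v {u \<in> V. {u, v} \<in> E}" using vy edgeV[OF vy] by (simp add: insert_commute)
  then have "y \<le> rhorizon V E v" unfolding rhorizon_def using fin[of v] by simp
  then have r: "t \<le> rhorizon V E v" using ty by order
  have "z \<in> insert w {u \<in> V. {u, w} \<in> E}" using zw edgeV[OF zw] by simp
  then have "lhorizon V E w \<le> z" unfolding lhorizon_def using fin[of w] by simp
  then have l: "lhorizon V E w \<le> s" using zs by order
  show ?thesis using eq vw r l by simp
qed

end

context XG begin

lemma main:
  shows "(\<exists>\<sigma> \<tau>. \<sigma> + \<tau> = dd \<and> bs \<sigma> = bt \<tau>)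
       \<or> (\<exists>\<sigma> \<tau>. \<sigma> + \<tau> + 1 = dd \<and> {as \<sigma>, at \<tau>} \<in> E)
       \<or> (\<exists>\<sigma> \<tau> v w. \<sigma> + \<tau> + 3 = dd
            \<and> v \<in> {as \<sigma>, bs \<sigma>}
            \<and> w \<in> {at \<tau>, bt \<tau>}
            \<and> v < w \<and> t \<le> rhorizon V E v \<and> lhorizon V E w \<le> s)"
proof (cases "\<exists>\<sigma>\<le>dd. bt (dd - \<sigma>) \<le> bs \<sigma>")
  case True
  then obtain \<sigma> where "\<sigma> \<le> dd" "bt (dd - \<sigma>) \<le> bs \<sigma>" by blast
  from lemI[OF this] obtain \<sigma>' where "\<sigma>' \<le> dd" "bs \<sigma>' = bt (dd - \<sigma>')" by blast
  then show ?thesis by (intro disjI1 exI[of _ \<sigma>'] exI[of _ "dd - \<sigma>'"]) simp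
next
  case False
  then have H: "\<forall>\<sigma>\<le>dd. bs \<sigma> < bt (dd - \<sigma>)" using not_le by auto
  obtain xs where xs: "wwalk V E xs" "hd xs = s" "last xs = t" "length xs \<le> Suc dd"
    using d_reach unfolding wk_def by blast
  have ne: "xs \<noteq> []" using xs(1) unfolding wwalk_def by simp
  have sV': "set xs \<subseteq> V" using xs(1) unfolding wwalk_def by simp
  have x0: "xs ! 0 = s" using xs(2) ne by (simp add: hd_conv_nth)
  have xn: "xs ! (length xs - 1) = t" using xs(3) ne by (simp add: last_conv_nth)
  have aV: "\<forall>k. 0 \<le> k \<and> k \<le> length xs - 1 \<longrightarrow> xs ! k \<in> V"
  proof (intro allI impI)
    fix k assume "0 \<le> k \<and> k \<le> length xs - 1"
    then have "k < length xs" using ne by (cases xs) auto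
    then have "xs ! k \<in> set xs" by (rule nth_mem)
    then show "xs ! k \<in> V" using sV' by blast
  qed
  have "wk V E V (length xs - 1 - 0) (xs ! 0) (xs ! (length xs - 1))"
    by (rule wk_seg[OF xs(1) _ _ aV]) (use ne in auto)
  then have "wk V E V (length xs - 1) s t" using x0 xn by simp
  then have "dd \<le> length xs - 1" by (rule d_min)
  then have len: "length xs = Suc dd" using xs(4) ne by (cases xs) auto
  have xd: "xs ! dd = t" using xn len by simp
  have edge: "{xs ! k, xs ! Suc k} \<in> E" if "k < dd" for k
    using xs(1) that len unfolding wwalk_def by simp
  have seg: "wk V E U (j - i) (xs ! i) (xs ! j)"
    if "i \<le> j" "j \<le> dd" "\<forall>k. i \<le> k \<and> k \<le> j \<longrightarrow> xs ! k \<in> U" for U i j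
    using wk_seg[OF xs(1) _ that(1) that(3)] that(2) len by simp
  have inV: "xs ! k \<in> V" if "k \<le> dd" for k using sV' nth_mem[of k xs] that len by auto
  have exm: "\<exists>m. m \<le> dd \<and> t < xs ! m"
  proof (rule ccontr)
    assume "\<not> ?thesis"
    then have "\<forall>k. 0 \<le> k \<and> k \<le> dd \<longrightarrow> xs ! k \<in> Us" using inV by (auto simp: not_less)
    from seg[OF _ order_refl this] have "wk V E Us dd s t" using x0 xd by simp
    then have "t \<le> bs dd" using S_mem by blast
    moreover have "bs dd < bt 0" using H[rule_format, of dd] by simp
    ultimately show False using C0 by simp
  qed
  define m where "m = (LEAST m. m \<le> dd \<and> t < xs ! m)"
  have m: "m \<le> dd" "t < xs ! m" using LeastI_ex[OF exm] unfolding m_def by auto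
  have mlt: "xs ! k \<le> t" if "k < m" for k
  proof -
    have "\<not> (k \<le> dd \<and> t < xs ! k)" using not_less_Least[of k "\<lambda>m. m \<le> dd \<and> t < xs ! m"] that
      unfolding m_def by simp
    then show ?thesis using that m(1) by simp
  qed
  have m0: "m \<noteq> 0"
  proof
    assume "m = 0"
    then have "t < s" using m(2) x0 by simp
    then show False using st by simp
  qed
  have exl: "\<exists>l. l \<le> dd \<and> xs ! l < s"
  proof (rule ccontr)
    assume "\<not> ?thesis"
    then have "\<forall>k. 0 \<le> k \<and> k \<le> dd \<longrightarrow> xs ! k \<in> Ut" using inV by (auto simp: not_less)
    from seg[OF _ order_refl this] have "wk V E Ut dd s t" using x0 xd by simp
    then have "wk V E Ut dd t s" by (rule wk_sym)
    then have "bt dd \<le> s" using T_mem by blast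
    moreover have "bs 0 < bt dd" using H[rule_format, of 0] by simp
    ultimately show False using B0 by simp
  qed
  define l where "l = (GREATEST l. l \<le> dd \<and> xs ! l < s)"
  obtain l0 where l0: "l0 \<le> dd \<and> xs ! l0 < s" using exl by blast
  have l: "l \<le> dd" "xs ! l < s"
    using GreatestI_nat[of "\<lambda>l. l \<le> dd \<and> xs ! l < s" l0 dd] l0 unfolding l_def by auto
  have lgt: "s \<le> xs ! k" if "l < k" "k \<le> dd" for k
  proof (rule ccontr)
    assume "\<not> s \<le> xs ! k"
    then have Pk: "k \<le> dd \<and> xs ! k < s" using that(2) by simp
    have "k \<le> (GREATEST l. l \<le> dd \<and> xs ! l < s)"
      by (rule Greatest_le_nat[of _ k dd]) (use Pk in auto)
    then have "k \<le> l" unfolding l_def .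
    then show False using that by simp
  qed
  have ld: "l < dd" using l xd st by (metis le_neq_implies_less less_asym)
  have wT: "wk V E Ut (dd - Suc l) t (xs ! Suc l)"
  proof -
    have "\<forall>k. Suc l \<le> k \<and> k \<le> dd \<longrightarrow> xs ! k \<in> Ut" using inV lgt by auto
    from seg[OF _ order_refl this] ld have "wk V E Ut (dd - Suc l) (xs ! Suc l) t" using xd by simp
    then show ?thesis by (rule wk_sym)
  qed
  have ezl: "{xs ! l, xs ! Suc l} \<in> E" using edge ld by simp
  have wzl: "wk V E V l s (xs ! l)"
  proof -
    have "\<forall>k. 0 \<le> k \<and> k \<le> l \<longrightarrow> xs ! k \<in> V" using inV l(1) by auto
    from seg[OF _ l(1) this] show ?thesis using x0 by simp
  qed
  have wS: "wk V E Us (m - 1) s (xs ! (m - 1))"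
  proof -
    have "\<forall>k. 0 \<le> k \<and> k \<le> m - 1 \<longrightarrow> xs ! k \<in> Us" using inV mlt m m0 by auto
    from seg[OF _ _ this] m show ?thesis using x0 by simp
  qed
  have evy: "{xs ! (m - 1), xs ! m} \<in> E" using edge[of "m - 1"] m m0 by simp
  have wym: "wk V E V (dd - m) (xs ! m) t"
  proof -
    have "\<forall>k. m \<le> k \<and> k \<le> dd \<longrightarrow> xs ! k \<in> V" using inV by auto
    from seg[OF m(1) order_refl this] show ?thesis using xd by simp
  qed
  consider "Suc (Suc l) \<le> m" | "Suc l = m" | "m \<le> l" by arith
  then show ?thesis
  proof cases
    case 1
    have "\<forall>k. 0 \<le> k \<and> k \<le> Suc l \<longrightarrow> xs ! k \<in> Us" using inV mlt 1 m by auto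
    from seg[OF _ _ this] ld have "wk V E Us (Suc l) s (xs ! Suc l)" using x0 by simp
    from sep[OF H _ this wT] ld have "xs ! Suc l < xs ! Suc l" by simp
    then show ?thesis by simp
  next
    case 2
    have ml1: "m - 1 = l" using 2 by simp
    have wa: "wk V E Us l s (xs ! l)" using wS unfolding ml1 .
    have tb: "t < xs ! Suc l" using m(2) 2 by simp
    have "{as l, at (dd - Suc l)} \<in> E"
      by (rule lemA[OF wa wT ezl l(2) tb]) (use ld in simp)
    moreover have "l + (dd - Suc l) + 1 = dd" using ld by simp
    ultimately show ?thesis by blast
  next
    case 3
    have "m \<noteq> l" using m(2) l(2) st by auto
    then have ml: "m < l" using 3 by simp
    obtain v where v: "v = as (m - 1) \<or> v = bs (m - 1)" "{v, xs ! m} \<in> E"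
      using lemB1[OF wS evy m(2) wym] m m0 by auto
    obtain w where w: "w = at (dd - Suc l) \<or> w = bt (dd - Suc l)" "{xs ! l, w} \<in> E"
      using lemB2[OF wT ezl l(2) wzl] ld by auto
    have wv: "wk V E Us (m - 1) s v" using v(1) S_ex[of "m - 1"] by auto
    have ww: "wk V E Ut (dd - Suc l) t w" using w(1) T_ex[of "dd - Suc l"] by auto
    have "(m - 1) + (dd - Suc l) + 3 \<le> dd" using ml ld m0 by simp
    from Bfin[OF H wv v(2) m(2) ww w(2) l(2) this]
    have "(m - 1) + (dd - Suc l) + 3 = dd \<and> v < w \<and> t \<le> rhorizon V E v \<and> lhorizon V E w \<le> s" .
    then show ?thesis using v(1) w(1)
      by (intro disjI2 exI[of _ "m - 1"] exI[of _ "dd - Suc l"] exI[of _ v] exI[of _ w]) auto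
  qed
qed

end

theorem lemma13:
  fixes V :: "'a::linorder set" and E :: "'a set set" and s t :: 'a
  assumes "simple_graph V E"
    and "X_property V E"
    and "s \<in> V" and "t \<in> V" and "s < t"
    and "\<exists>k. reach_within V E V k s t"
    and "d = graph_dist V E s t"
  shows "(\<exists>\<sigma> \<tau>. \<sigma> + \<tau> = d \<and> beta_s V E s t \<sigma> = beta_t V E s t \<tau>)
       \<or> (\<exists>\<sigma> \<tau>. \<sigma> + \<tau> + 1 = d \<and> {alpha_s V E s t \<sigma>, alpha_t V E s t \<tau>} \<in> E)
       \<or> (\<exists>\<sigma> \<tau> v w. \<sigma> + \<tau> + 3 = d
            \<and> v \<in> {alpha_s V E s t \<sigma>, beta_s V E s t \<sigma>}
            \<and> w \<in> {alpha_t V E s t \<tau>, beta_t V E s t \<tau>}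
            \<and> v < w \<and> t \<le> rhorizon V E v \<and> lhorizon V E w \<le> s)"
proof -
  interpret XG V E s t using assms(1-6) by unfold_locales
  show ?thesis using main assms(7) by simp
qed

end
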